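(* Let $\zeta$ denote the $\mathbb P_0$-almost sure limit $\zeta=\lim_{t\to+\infty}-\frac1t\log L_t(\mathcal X^t)$ (the Neyman–Pearson error exponent of the probability of miss). Then $$\zeta\le\overline\zeta:=\sum_{i=1}^N\pi_i\frac{\beta_i^2}{2}.$$
   Context: Let $N\ge 2$, $V=\{1,\dots,N\}$, $P\in\mathbb R^{N\times N}$ row-stochastic, irreducible and aperiodic with stationary distribution $\pi>0$, and $\beta_1,\dots,\beta_N\in\mathbb R$. For $s^t\in V^t$, $P(s^t)=\pi_{s_1}\prod_{k=1}^{t-1}P_{s_ks_{k+1}}$, $\mathcal S^t=\{s^t:P(s^t)>0\}$. Hypotheses: under $\mathcal H_0$ (law $\mathbb P_0$) the $X_{i,k}$, $i\in V,k\ge1$, are i.i.d. $\mathcal N(0,1)$; under $\mathcal H_1$ (law $\mathbb P_1$) $(S_k)_{k\ge1}$ is a Markov chain with initial law $\pi$ and transition matrix $P$ and, conditionally on it, the $X_{i,k}$ are independent with $X_{i,k}\sim\mathcal N(\beta_i,1)$ if $S_k=i$ and $\mathcal N(0,1)$ otherwise. The likelihood ratio is $L_t(\mathcal X^t)=\sum_{s^t\in\mathcal S^t}P(s^t)\exp\big(\sum_{k=1}^t(\beta_{s_k}X_{s_k,k}-\beta_{s_k}^2/2)\big)$; under $\mathbb P_0$ the limit of $-\frac1t\log L_t$ exists almost surely and is a deterministic constant. *)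

theory Defs
  imports "HOL-Probability.Probability"
begin

text \<open>States are V = {1..N}; the transition matrix is P :: nat => nat => real,
  only its entries on V x V matter.\<close>

definition row_stochastic :: "nat \<Rightarrow> (nat \<Rightarrow> nat \<Rightarrow> real) \<Rightarrow> bool" where
  "row_stochastic N P \<longleftrightarrow>
     (\<forall>i\<in>{1..N}. \<forall>j\<in>{1..N}. P i j \<ge> 0) \<and> (\<forall>i\<in>{1..N}. (\<Sum>j=1..N. P i j) = 1)"

fun matpow :: "nat \<Rightarrow> (nat \<Rightarrow> nat \<Rightarrow> real) \<Rightarrow> nat \<Rightarrow> nat \<Rightarrow> nat \<Rightarrow> real" where
  "matpow N P 0 i j = (if i = j then 1 else 0)"
| "matpow N P (Suc n) i j = (\<Sum>l=1..N. matpow N P n i l * P l j)"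

definition irreducible_chain :: "nat \<Rightarrow> (nat \<Rightarrow> nat \<Rightarrow> real) \<Rightarrow> bool" where
  "irreducible_chain N P \<longleftrightarrow> (\<forall>i\<in>{1..N}. \<forall>j\<in>{1..N}. \<exists>n>0. matpow N P n i j > 0)"

definition period :: "nat \<Rightarrow> (nat \<Rightarrow> nat \<Rightarrow> real) \<Rightarrow> nat \<Rightarrow> nat" where
  "period N P i = Gcd {n. n \<ge> 1 \<and> matpow N P n i i > 0}"

definition aperiodic_chain :: "nat \<Rightarrow> (nat \<Rightarrow> nat \<Rightarrow> real) \<Rightarrow> bool" where
  "aperiodic_chain N P \<longleftrightarrow> (\<forall>i\<in>{1..N}. period N P i = 1)"

definition stationary_dist :: "nat \<Rightarrow> (nat \<Rightarrow> nat \<Rightarrow> real) \<Rightarrow> (nat \<Rightarrow> real) \<Rightarrow> bool" where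
  "stationary_dist N P \<pi> \<longleftrightarrow> (\<forall>i\<in>{1..N}. \<pi> i \<ge> 0) \<and> (\<Sum>i=1..N. \<pi> i) = 1 \<and>
     (\<forall>j\<in>{1..N}. (\<Sum>i=1..N. \<pi> i * P i j) = \<pi> j)"

definition path_prob :: "(nat \<Rightarrow> nat \<Rightarrow> real) \<Rightarrow> (nat \<Rightarrow> real) \<Rightarrow> nat \<Rightarrow> (nat \<Rightarrow> nat) \<Rightarrow> real" where
  "path_prob P \<pi> t s = \<pi> (s 1) * (\<Prod>k=1..t-1. P (s k) (s (Suc k)))"

definition paths :: "nat \<Rightarrow> (nat \<Rightarrow> nat \<Rightarrow> real) \<Rightarrow> (nat \<Rightarrow> real) \<Rightarrow> nat \<Rightarrow> (nat \<Rightarrow> nat) set" where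
  "paths N P \<pi> t = {s \<in> {1..t} \<rightarrow>\<^sub>E {1..N}. path_prob P \<pi> t s > 0}"

definition likelihood_ratio ::
  "nat \<Rightarrow> (nat \<Rightarrow> nat \<Rightarrow> real) \<Rightarrow> (nat \<Rightarrow> real) \<Rightarrow> (nat \<Rightarrow> real) \<Rightarrow> nat \<Rightarrow> (nat \<Rightarrow> nat \<Rightarrow> real) \<Rightarrow> real" where
  "likelihood_ratio N P \<pi> \<beta> t x =
     (\<Sum>s\<in>paths N P \<pi> t. path_prob P \<pi> t s *
        exp (\<Sum>k=1..t. \<beta> (s k) * x (s k) k - (\<beta> (s k))\<^sup>2 / 2))"

end

theory Submission
  imports Defs
begin

lemma pp_upd:
  assumes "t \<ge> 1"
  shows "path_prob P \<pi> (Suc t) (g(Suc t := y)) = path_prob P \<pi> t g * P (g t) y"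
proof -
  have e: "{1..t} = insert t {1..t-1}" using assms by auto
  have "(\<Prod>k=1..t. P ((g(Suc t := y)) k) ((g(Suc t := y)) (Suc k)))
      = P (g t) y * (\<Prod>k=1..t-1. P ((g(Suc t := y)) k) ((g(Suc t := y)) (Suc k)))"
    by (subst e, subst prod.insert) auto
  also have "(\<Prod>k=1..t-1. P ((g(Suc t := y)) k) ((g(Suc t := y)) (Suc k)))
      = (\<Prod>k=1..t-1. P (g k) (g (Suc k)))"
    by (rule prod.cong) auto
  finally show ?thesis using assms unfolding path_prob_def by (simp add: mult_ac)
qed

lemma sum_Suc_paths:
  assumes "t \<ge> 1"
  shows "(\<Sum>s\<in>{1..Suc t} \<rightarrow>\<^sub>E V. path_prob P \<pi> (Suc t) s * G s)
       = (\<Sum>g\<in>{1..t} \<rightarrow>\<^sub>E V. \<Sum>y\<in>V. path_prob P \<pi> t g * P (g t) y * G (g(Suc t := y)))"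
proof -
  have e: "{1..Suc t} = insert (Suc t) {1..t}" by auto
  have "(\<Sum>s\<in>{1..Suc t} \<rightarrow>\<^sub>E V. path_prob P \<pi> (Suc t) s * G s)
     = (\<Sum>p\<in>V \<times> ({1..t} \<rightarrow>\<^sub>E V). path_prob P \<pi> (Suc t) ((snd p)(Suc t := fst p)) * G ((snd p)(Suc t := fst p)))"
    unfolding e PiE_insert_eq
    by (subst sum.reindex[OF inj_combinator]) (auto simp: case_prod_beta)
  also have "\<dots> = (\<Sum>y\<in>V. \<Sum>g\<in>{1..t} \<rightarrow>\<^sub>E V. path_prob P \<pi> t g * P (g t) y * G (g(Suc t := y)))"
    by (simp add: sum.cartesian_product case_prod_beta pp_upd[OF assms])
  finally show ?thesis by (subst sum.swap) simp
qed

lemma marg_last: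
  assumes st: "stationary_dist N P \<pi>"
  shows "(\<Sum>s\<in>{1..Suc n} \<rightarrow>\<^sub>E {1..N}. path_prob P \<pi> (Suc n) s * g (s (Suc n)))
        = (\<Sum>i=1..N. \<pi> i * g i)"
proof (induction n arbitrary: g)
  case 0
  have e: "{1..Suc 0} = insert 1 {}" by auto
  have e2: "{1..Suc 0} \<rightarrow>\<^sub>E {1..N} = (\<lambda>i. (\<lambda>_. undefined)(1 := i)) ` {1..N}"
    unfolding e PiE_insert_eq PiE_empty_domain by auto
  have inj: "inj_on (\<lambda>i. (\<lambda>_. undefined)(1 := i)) {1..N}"
    by (rule inj_onI) (metis fun_upd_same)
  show ?case unfolding e2
    by (subst sum.reindex[OF inj]) (auto simp: path_prob_def)
next
  case (Suc n)
  have "(\<Sum>s\<in>{1..Suc (Suc n)} \<rightarrow>\<^sub>E {1..N}. path_prob P \<pi> (Suc (Suc n)) s * g (s (Suc (Suc n))))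
     = (\<Sum>h\<in>{1..Suc n} \<rightarrow>\<^sub>E {1..N}. \<Sum>y=1..N. path_prob P \<pi> (Suc n) h * P (h (Suc n)) y * g y)"
    by (subst sum_Suc_paths) auto
  also have "\<dots> = (\<Sum>h\<in>{1..Suc n} \<rightarrow>\<^sub>E {1..N}. path_prob P \<pi> (Suc n) h * (\<lambda>i. \<Sum>y=1..N. P i y * g y) (h (Suc n)))"
    by (simp add: sum_distrib_left mult_ac)
  also have "\<dots> = (\<Sum>i=1..N. \<pi> i * (\<Sum>y=1..N. P i y * g y))" by (rule Suc.IH)
  also have "\<dots> = (\<Sum>y=1..N. (\<Sum>i=1..N. \<pi> i * P i y) * g y)"
    by (simp add: sum_distrib_left sum_distrib_right mult_ac) (rule sum.swap)
  also have "\<dots> = (\<Sum>y=1..N. \<pi> y * g y)"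
    using st unfolding stationary_dist_def by (intro sum.cong) auto
  finally show ?case .
qed

lemma marg:
  assumes st: "stationary_dist N P \<pi>" and rs: "row_stochastic N P"
    and k: "1 \<le> k" "k \<le> t"
  shows "(\<Sum>s\<in>{1..t} \<rightarrow>\<^sub>E {1..N}. path_prob P \<pi> t s * g (s k)) = (\<Sum>i=1..N. \<pi> i * g i)"
  using k(2)
proof (induction t rule: dec_induct)
  case base
  then show ?case using marg_last[OF st, of "k-1" g] k by simp
next
  case (step t)
  have "(\<Sum>s\<in>{1..Suc t} \<rightarrow>\<^sub>E {1..N}. path_prob P \<pi> (Suc t) s * g (s k))
     = (\<Sum>h\<in>{1..t} \<rightarrow>\<^sub>E {1..N}. \<Sum>y=1..N. path_prob P \<pi> t h * P (h t) y * g (h k))"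
    using step k by (subst sum_Suc_paths) auto
  also have "\<dots> = (\<Sum>h\<in>{1..t} \<rightarrow>\<^sub>E {1..N}. path_prob P \<pi> t h * g (h k) * (\<Sum>y=1..N. P (h t) y))"
    by (simp add: sum_distrib_left mult_ac)
  also have "\<dots> = (\<Sum>h\<in>{1..t} \<rightarrow>\<^sub>E {1..N}. path_prob P \<pi> t h * g (h k))"
  proof (intro sum.cong refl)
    fix h assume "h \<in> {1..t} \<rightarrow>\<^sub>E {1..N}"
    then have "h t \<in> {1..N}" using step k by auto
    then show "path_prob P \<pi> t h * g (h k) * (\<Sum>y=1..N. P (h t) y) = path_prob P \<pi> t h * g (h k)"
      using rs unfolding row_stochastic_def by simp
  qed
  finally show ?case using step.IH by simp
qed


lemma jensen_exp:
  fixes w f :: "'a \<Rightarrow> real"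
  assumes "finite A" "\<And>a. a \<in> A \<Longrightarrow> w a \<ge> 0" "(\<Sum>a\<in>A. w a) = 1"
  shows "exp (\<Sum>a\<in>A. w a * f a) \<le> (\<Sum>a\<in>A. w a * exp (f a))"
proof -
  define m where "m = (\<Sum>a\<in>A. w a * f a)"
  have "exp m = exp m * (\<Sum>a\<in>A. w a * (1 + (f a - m)))"
    using assms by (simp add: algebra_simps sum.distrib sum_subtractf m_def sum_distrib_right[symmetric])
  also have "\<dots> \<le> exp m * (\<Sum>a\<in>A. w a * exp (f a - m))"
    using assms by (intro mult_left_mono sum_mono mult_left_mono) auto
  also have "\<dots> = (\<Sum>a\<in>A. w a * exp (f a))"
    by (simp add: sum_distrib_left exp_diff)
  finally show ?thesis unfolding m_def .
qed

lemma pp_nonneg: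
  assumes rs: "row_stochastic N P" and st: "stationary_dist N P \<pi>" and t: "t \<ge> 1"
    and s: "s \<in> {1..t} \<rightarrow>\<^sub>E {1..N}"
  shows "path_prob P \<pi> t s \<ge> 0"
proof -
  have "s 1 \<in> {1..N}" using s t by auto
  then have "\<pi> (s 1) \<ge> 0" using st unfolding stationary_dist_def by auto
  moreover have "\<forall>k\<in>{1..t-1}. P (s k) (s (Suc k)) \<ge> 0"
  proof
    fix k assume "k \<in> {1..t-1}"
    then have "s k \<in> {1..N}" "s (Suc k) \<in> {1..N}" using s by auto
    then show "P (s k) (s (Suc k)) \<ge> 0" using rs unfolding row_stochastic_def by auto
  qed
  ultimately show ?thesis unfolding path_prob_def by (intro mult_nonneg_nonneg prod_nonneg) auto
qed

lemma lr_bound: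
  assumes rs: "row_stochastic N P" and st: "stationary_dist N P \<pi>" and t: "t \<ge> 1"
  shows "likelihood_ratio N P \<pi> \<beta> t x > 0 \<and>
    ln (likelihood_ratio N P \<pi> \<beta> t x) \<ge> (\<Sum>k=1..t. \<Sum>i=1..N. \<pi> i * (\<beta> i * x i k - (\<beta> i)\<^sup>2 / 2))"
proof -
  let ?A = "{1..t} \<rightarrow>\<^sub>E {1..N}"
  let ?w = "path_prob P \<pi> t"
  let ?a = "\<lambda>s. \<Sum>k=1..t. \<beta> (s k) * x (s k) k - (\<beta> (s k))\<^sup>2 / 2"
  have fin: "finite ?A" by (simp add: finite_PiE)
  have w0: "\<And>s. s \<in> ?A \<Longrightarrow> ?w s \<ge> 0" using pp_nonneg[OF rs st t] by blast
  have L: "likelihood_ratio N P \<pi> \<beta> t x = (\<Sum>s\<in>?A. ?w s * exp (?a s))"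
    unfolding likelihood_ratio_def
  proof (rule sum.mono_neutral_left[OF fin])
    show "paths N P \<pi> t \<subseteq> ?A" unfolding paths_def by auto
    show "\<forall>s\<in>?A - paths N P \<pi> t. ?w s * exp (?a s) = 0"
    proof
      fix s assume s: "s \<in> ?A - paths N P \<pi> t"
      then have "?w s = 0" using w0[of s] unfolding paths_def by auto
      then show "?w s * exp (?a s) = 0" by simp
    qed
  qed
  have w1: "(\<Sum>s\<in>?A. ?w s) = 1"
    using marg[OF st rs order.refl t, of "\<lambda>_. 1"] st unfolding stationary_dist_def by simp
  have m: "(\<Sum>s\<in>?A. ?w s * ?a s) = (\<Sum>k=1..t. \<Sum>i=1..N. \<pi> i * (\<beta> i * x i k - (\<beta> i)\<^sup>2 / 2))"
  proof -
    have "(\<Sum>s\<in>?A. ?w s * ?a s) = (\<Sum>k=1..t. \<Sum>s\<in>?A. ?w s * (\<lambda>i. \<beta> i * x i k - (\<beta> i)\<^sup>2 / 2) (s k))"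
      by (simp only: sum_distrib_left) (rule sum.swap)
    also have "\<dots> = (\<Sum>k=1..t. \<Sum>i=1..N. \<pi> i * (\<beta> i * x i k - (\<beta> i)\<^sup>2 / 2))"
      by (intro sum.cong refl marg[OF st rs]) auto
    finally show ?thesis .
  qed
  have J: "exp (\<Sum>s\<in>?A. ?w s * ?a s) \<le> likelihood_ratio N P \<pi> \<beta> t x"
    unfolding L by (rule jensen_exp[OF fin w0 w1])
  have pos: "likelihood_ratio N P \<pi> \<beta> t x > 0" by (rule less_le_trans[OF exp_gt_zero J])
  have "ln (exp (\<Sum>s\<in>?A. ?w s * ?a s)) \<le> ln (likelihood_ratio N P \<pi> \<beta> t x)"
    using J pos by (subst ln_le_cancel_iff) auto
  then have "ln (likelihood_ratio N P \<pi> \<beta> t x) \<ge> (\<Sum>s\<in>?A. ?w s * ?a s)" by simp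
  then show ?thesis using m pos by simp
qed

context prob_space begin

lemma std_facts:
  assumes D: "distributed M lborel Y std_normal_density"
  shows "integrable M Y" "integrable M (\<lambda>\<omega>. Y \<omega> * Y \<omega>)" "expectation Y = 0"
    "expectation (\<lambda>\<omega>. Y \<omega> * Y \<omega>) = 1" "Y \<in> borel_measurable M"
proof -
  have nn: "\<And>x. 0 \<le> std_normal_density x" by simp
  show "integrable M Y"
    using distributed_integrable[OF D, of "\<lambda>x. x"] integrable_std_normal_moment[of 1] by simp
  show "integrable M (\<lambda>\<omega>. Y \<omega> * Y \<omega>)"
    using distributed_integrable[OF D, of "\<lambda>x. x * x"] integrable_std_normal_moment[of 2]
    by (simp add: power2_eq_square)
  show "expectation Y = 0" by (rule standard_normal_distributed_expectation[OF D])
  have "expectation (\<lambda>\<omega>. Y \<omega> * Y \<omega>) = (\<integral>x. std_normal_density x * (x * x) \<partial>lborel)"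
    using distributed_integral[OF D, of "\<lambda>x. x * x"] by simp
  also have "\<dots> = 1" using integral_std_normal_moment_even[of 1] by (simp add: power2_eq_square)
  finally show "expectation (\<lambda>\<omega>. Y \<omega> * Y \<omega>) = 1" .
  show "Y \<in> borel_measurable M" using distributed_measurable[OF D] by simp
qed

lemma pair_moment:
  assumes ind: "indep_vars (\<lambda>_. borel) Z J" and p: "p \<in> J" and q: "q \<in> J"
    and D: "\<And>r. r \<in> J \<Longrightarrow> distributed M lborel (Z r) std_normal_density"
  shows "integrable M (\<lambda>\<omega>. Z p \<omega> * Z q \<omega>)"
    "expectation (\<lambda>\<omega>. Z p \<omega> * Z q \<omega>) = (if p = q then 1 else 0)"
proof -
  have "integrable M (\<lambda>\<omega>. Z p \<omega> * Z q \<omega>) \<and> expectation (\<lambda>\<omega>. Z p \<omega> * Z q \<omega>) = (if p = q then 1 else 0)"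
  proof (cases "p = q")
    case True
    then show ?thesis using std_facts[OF D[OF p]] by simp
  next
    case False
    have "indep_vars (\<lambda>_. borel) Z (insert p {q})"
      using indep_vars_subset[OF ind] p q by auto
    from indep_vars_sum[OF _ _ this] False
    have iv: "indep_var borel (Z p) borel (Z q)" by simp
    show ?thesis
      using indep_var_lebesgue_integral[OF iv] indep_var_integrable[OF iv]
        std_facts[OF D[OF p]] std_facts[OF D[OF q]] False by simp
  qed
  then show "integrable M (\<lambda>\<omega>. Z p \<omega> * Z q \<omega>)"
    "expectation (\<lambda>\<omega>. Z p \<omega> * Z q \<omega>) = (if p = q then 1 else 0)" by auto
qed

lemma sum_moment:
  assumes ind: "indep_vars (\<lambda>_. borel) Z J" and I: "finite I" "I \<subseteq> J"
    and D: "\<And>r. r \<in> J \<Longrightarrow> distributed M lborel (Z r) std_normal_density"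
  shows "integrable M (\<lambda>\<omega>. (\<Sum>p\<in>I. a p * Z p \<omega>)\<^sup>2)"
    "expectation (\<lambda>\<omega>. (\<Sum>p\<in>I. a p * Z p \<omega>)\<^sup>2) = (\<Sum>p\<in>I. (a p)\<^sup>2)"
proof -
  have eq: "(\<lambda>\<omega>. (\<Sum>p\<in>I. a p * Z p \<omega>)\<^sup>2) = (\<lambda>\<omega>. \<Sum>p\<in>I. \<Sum>q\<in>I. a p * a q * (Z p \<omega> * Z q \<omega>))"
    by (simp add: power2_eq_square sum_product mult_ac)
  have int: "\<And>p q. p \<in> I \<Longrightarrow> q \<in> I \<Longrightarrow> integrable M (\<lambda>\<omega>. Z p \<omega> * Z q \<omega>)"
    using pair_moment[OF ind _ _ D] I by blast
  show "integrable M (\<lambda>\<omega>. (\<Sum>p\<in>I. a p * Z p \<omega>)\<^sup>2)"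
    unfolding eq using int by (intro Bochner_Integration.integrable_sum integrable_mult_right) auto
  have "expectation (\<lambda>\<omega>. (\<Sum>p\<in>I. a p * Z p \<omega>)\<^sup>2)
      = (\<Sum>p\<in>I. \<Sum>q\<in>I. a p * a q * expectation (\<lambda>\<omega>. Z p \<omega> * Z q \<omega>))"
    unfolding eq using int by (simp add: Bochner_Integration.integral_sum)
  also have "\<dots> = (\<Sum>p\<in>I. \<Sum>q\<in>I. a p * a q * (if p = q then 1 else 0))"
  proof (intro sum.cong refl)
    fix p q assume "p \<in> I" "q \<in> I"
    then have "p \<in> J" "q \<in> J" using I by auto
    then show "a p * a q * expectation (\<lambda>\<omega>. Z p \<omega> * Z q \<omega>) = a p * a q * (if p = q then 1 else 0)"
      using pair_moment(2)[OF ind _ _ D] by simp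
  qed
  also have "\<dots> = (\<Sum>p\<in>I. (a p)\<^sup>2)"
    using I by (simp add: power2_eq_square if_distrib sum.delta cong: if_cong)
  finally show "expectation (\<lambda>\<omega>. (\<Sum>p\<in>I. a p * Z p \<omega>)\<^sup>2) = (\<Sum>p\<in>I. (a p)\<^sup>2)" .
qed

end

theorem proposition1:
  fixes N :: nat and P :: "nat \<Rightarrow> nat \<Rightarrow> real" and \<pi> \<beta> :: "nat \<Rightarrow> real"
    and M :: "'w measure" and X :: "nat \<Rightarrow> nat \<Rightarrow> 'w \<Rightarrow> real" and \<zeta> :: real
  assumes "N \<ge> 2"
    and "row_stochastic N P" and "irreducible_chain N P" and "aperiodic_chain N P"
    and "stationary_dist N P \<pi>" and "\<forall>i\<in>{1..N}. \<pi> i > 0"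
    and "prob_space M"
    and "prob_space.indep_vars M (\<lambda>_. borel) (\<lambda>(i, k). X i k) ({1..N} \<times> {1..})"
    and "\<forall>i\<in>{1..N}. \<forall>k\<ge>1. distributed M lborel (X i k) std_normal_density"
    and "AE \<omega> in M. (\<lambda>t. - (1 / real t) * ln (likelihood_ratio N P \<pi> \<beta> t (\<lambda>i k. X i k \<omega>)))
                       \<longlonglongrightarrow> \<zeta>"
  shows "\<zeta> \<le> (\<Sum>i=1..N. \<pi> i * (\<beta> i)\<^sup>2 / 2)"
proof (rule ccontr)
  assume neg: "\<not> ?thesis"
  define C0 where "C0 = (\<Sum>i=1..N. \<pi> i * (\<beta> i)\<^sup>2 / 2)"
  define \<delta> where "\<delta> = \<zeta> - C0"
  have \<delta>: "\<delta> > 0" using neg unfolding \<delta>_def C0_def by simp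
  interpret prob_space M by fact
  note rs = assms(2) and st = assms(5)
  define Z where "Z = (\<lambda>(i::nat, k::nat). X i k)"
  define J where "J = {1..N} \<times> {1::nat..}"
  define c where "c = (\<lambda>i. \<pi> i * \<beta> i)"
  define S where "S = (\<lambda>t \<omega>. \<Sum>k=1..t. \<Sum>i=1..N. c i * X i k \<omega>)"
  define F where "F = (\<lambda>t \<omega>. - (1 / real t) * ln (likelihood_ratio N P \<pi> \<beta> t (\<lambda>i k. X i k \<omega>)))"
  define K where "K = (\<Sum>i=1..N. (c i)\<^sup>2)"
  have ind: "indep_vars (\<lambda>_. borel) Z J" using assms(8) unfolding Z_def J_def by simp
  have D: "\<And>r. r \<in> J \<Longrightarrow> distributed M lborel (Z r) std_normal_density"
    using assms(9) unfolding Z_def J_def by auto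
  have Xm: "\<And>i k. i \<in> {1..N} \<Longrightarrow> k \<ge> 1 \<Longrightarrow> X i k \<in> borel_measurable M"
    using assms(9) distributed_measurable by fastforce
  have Sm[measurable]: "\<And>t. S t \<in> borel_measurable M"
    unfolding S_def using Xm by (intro borel_measurable_sum borel_measurable_times borel_measurable_const) auto
  have SZ: "\<And>t \<omega>. S t \<omega> = (\<Sum>p\<in>{1..N} \<times> {1..t}. c (fst p) * Z p \<omega>)"
    unfolding S_def Z_def by (subst sum.swap) (simp add: sum.cartesian_product case_prod_beta)
  have mom: "\<And>t. integrable M (\<lambda>\<omega>. (S t \<omega>)\<^sup>2) \<and> expectation (\<lambda>\<omega>. (S t \<omega>)\<^sup>2) = real t * K"
  proof -
    fix t
    have sub: "{1..N} \<times> {1..t} \<subseteq> J" unfolding J_def by auto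
    have "(\<Sum>p\<in>{1..N} \<times> {1..t}. (c (fst p))\<^sup>2) = real t * K"
    proof -
      have "(\<Sum>p\<in>{1..N} \<times> {1..t}. (c (fst p))\<^sup>2) = (\<Sum>i=1..N. \<Sum>k=1..t. (c i)\<^sup>2)"
        by (simp only: sum.cartesian_product) (intro sum.cong refl, auto)
      then show ?thesis unfolding K_def by (simp add: sum_distrib_left)
    qed
    then show "integrable M (\<lambda>\<omega>. (S t \<omega>)\<^sup>2) \<and> expectation (\<lambda>\<omega>. (S t \<omega>)\<^sup>2) = real t * K"
      unfolding SZ using sum_moment[OF ind _ sub D, of "\<lambda>p. c (fst p)"] by simp
  qed
  have bound: "\<And>t \<omega>. t \<ge> 1 \<Longrightarrow> F t \<omega> \<le> C0 - S t \<omega> / real t"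
  proof -
    fix t :: nat and \<omega> assume t: "t \<ge> 1"
    note lb = lr_bound[OF rs st t, of \<beta> "\<lambda>i k. X i k \<omega>"]
    have R: "(\<Sum>k=1..t. \<Sum>i=1..N. \<pi> i * (\<beta> i * X i k \<omega> - (\<beta> i)\<^sup>2 / 2)) = S t \<omega> - real t * C0"
      unfolding S_def C0_def c_def
      by (simp add: right_diff_distrib sum_subtractf mult_ac)
    show "F t \<omega> \<le> C0 - S t \<omega> / real t"
      using lb t unfolding F_def R by (simp add: field_simps)
  qed
  define Q where "Q = (\<lambda>t \<omega>. (S t \<omega>)\<^sup>2 \<ge> (\<delta> * real t / 2)\<^sup>2)"
  have AEQ: "AE \<omega> in M. \<exists>n. \<forall>t\<ge>n. Q t \<omega>"
    using assms(10)
  proof eventually_elim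
    case (elim \<omega>)
    then have lim: "(\<lambda>t. F t \<omega>) \<longlonglongrightarrow> \<zeta>" unfolding F_def .
    have "\<zeta> > C0 + \<delta> / 2" using \<delta> unfolding \<delta>_def by (simp add: field_simps)
    from order_tendstoD(1)[OF lim this]
    have ev: "eventually (\<lambda>t. F t \<omega> > C0 + \<delta> / 2) sequentially" .
    have "eventually (\<lambda>t. Q t \<omega>) sequentially"
      using ev eventually_ge_at_top[of 1]
    proof eventually_elim
      case (elim t)
      then have "C0 + \<delta> / 2 < C0 - S t \<omega> / real t" using bound[of t \<omega>] by linarith
      then have "S t \<omega> / real t < - (\<delta> / 2)" by linarith
      then have "S t \<omega> < - (\<delta> / 2) * real t" using elim by (simp add: divide_less_eq)
      then have "\<delta> * real t / 2 \<le> \<bar>S t \<omega>\<bar>" by simp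
      then have "(\<delta> * real t / 2)\<^sup>2 \<le> \<bar>S t \<omega>\<bar>\<^sup>2"
        using \<delta> by (intro power_mono) auto
      then show ?case unfolding Q_def by simp
    qed
    then show ?case unfolding eventually_sequentially by blast
  qed
  define E where "E = (\<lambda>n. {\<omega> \<in> space M. \<forall>t\<ge>n. Q t \<omega>})"
  have Em: "\<And>n. E n \<in> sets M" unfolding E_def Q_def by measurable
  have Eun: "(\<Union>n. E n) = {\<omega> \<in> space M. \<exists>n. \<forall>t\<ge>n. Q t \<omega>}" unfolding E_def by auto
  have "prob (\<Union>n. E n) = 1"
  proof -
    have Um: "(\<Union>n. E n) \<in> sets M" by (rule sets.countable_UN) (use Em in blast)
    then have Cm: "{\<omega> \<in> space M. \<exists>n. \<forall>t\<ge>n. Q t \<omega>} \<in> sets M" by (simp only: Eun)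
    have "prob {\<omega> \<in> space M. \<exists>n. \<forall>t\<ge>n. Q t \<omega>} = 1"
      using prob_Collect_eq_1[OF Cm] AEQ by blast
    then show ?thesis by (simp only: Eun)
  qed
  moreover have "(\<lambda>n. prob (E n)) \<longlonglongrightarrow> prob (\<Union>n. E n)"
  proof (rule finite_Lim_measure_incseq)
    show "range E \<subseteq> sets M" using Em by blast
    show "incseq E"
    proof (rule incseq_SucI)
      fix n show "E n \<subseteq> E (Suc n)" unfolding E_def by force
    qed
  qed
  ultimately have L1: "(\<lambda>n. prob (E n)) \<longlonglongrightarrow> 1" by simp
  have L0: "(\<lambda>n. 4 * K / \<delta>\<^sup>2 * inverse (real n)) \<longlonglongrightarrow> 0"
    by (intro tendsto_mult_right_zero lim_inverse_n)
  have le: "eventually (\<lambda>n. prob (E n) \<le> 4 * K / \<delta>\<^sup>2 * inverse (real n)) sequentially"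
    using eventually_ge_at_top[of 1]
  proof eventually_elim
    case (elim n)
    have cpos: "(\<delta> * real n / 2)\<^sup>2 > 0" using \<delta> elim by simp
    have "prob (E n) \<le> prob {\<omega> \<in> space M. (\<delta> * real n / 2)\<^sup>2 \<le> (S n \<omega>)\<^sup>2}"
      by (intro finite_measure_mono) (auto simp: E_def Q_def)
    also have "\<dots> \<le> expectation (\<lambda>\<omega>. (S n \<omega>)\<^sup>2) / (\<delta> * real n / 2)\<^sup>2"
      using mom[of n] cpos by (intro integral_Markov_inequality_measure[where A="space M"]) auto
    also have "\<dots> = 4 * K / \<delta>\<^sup>2 * inverse (real n)"
      using mom[of n] elim \<delta> by (simp add: field_simps power2_eq_square)
    finally show ?case .
  qed
  have "1 \<le> (0::real)" using tendsto_le[OF _ L0 L1 le] by simp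
  then show False by simp
qed

end
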